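(* Let $\mathscr{D}$ be a commutative variety, $L:X^{\circledast}\to Y$ a language, and $l,r:E\to X^{\circledast}$ its syntactic congruence. Let $e_L:X^{\circledast}\twoheadrightarrow \mathrm{Syn}(L)$ be the coequalizer of $l,r$ in $\mathbf{Mon}(\mathscr{D})$ (i.e. the quotient $X^{\circledast}/E$). Then there is a unique morphism $f_L:\mathrm{Syn}(L)\to Y$ in $\mathscr{D}$ with $L=f_L\cdot e_L$, and $(\mathrm{Syn}(L),e_L,f_L)$ is the syntactic $\mathscr{D}$-monoid of $L$: $e_L$ recognizes $L$ via $f_L$, and for every surjective $\mathscr{D}$-monoid morphism $e:X^{\circledast}\twoheadrightarrow M$ and morphism $f:M\to Y$ with $L=f\cdot e$ there is a (unique, surjective) $\mathscr{D}$-monoid morphism $h:M\to\mathrm{Syn}(L)$ with $e_L=h\cdot e$ (and then $f=f_L\cdot h$).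
   Context: A commutative variety $\mathscr{D}$ is a variety of finitary algebras in which for all $A,B$ the hom-set $\mathscr{D}(A,B)$ is a subalgebra $[A,B]$ of $B^{|A|}$; it has tensor products representing bimorphisms (maps homomorphic in each variable) and is symmetric monoidal closed. A $\mathscr{D}$-monoid is an algebra $M$ of $\mathscr{D}$ with a monoid structure $(|M|,\bullet,i)$ whose multiplication is a bimorphism; $\mathbf{Mon}(\mathscr{D})$ is the category of $\mathscr{D}$-monoids and homomorphisms that are both $\mathscr{D}$-morphisms and monoid morphisms. $X^{\circledast}$ is the free $\mathscr{D}$-monoid on a fixed object $X$; $Y$ is a fixed object. A language is a morphism $L:X^{\circledast}\to Y$. A $\mathscr{D}$-monoid morphism $e:X^{\circledast}\to M$ recognizes $L$ via $f:M\to Y$ if $L=f\cdot e$. The syntactic congruence of $L$ is $E=\{(u,v)\in|X^{\circledast}|^2\mid\forall x,y:\ L(x\bullet u\bullet y)=L(x\bullet v\bullet y)\}$, with projections $l,r:E\to X^{\circledast}$. The syntactic $\mathscr{D}$-monoid is the smallest $X$-generated $\mathscr{D}$-monoid (surjective $\mathscr{D}$-monoid morphism out of $X^{\circledast}$, ordered by factorization) recognizing $L$. *)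

theory Defs
  imports Main
begin

text \<open>A signature is given by a type 'o of operation symbols and an arity map
  ar :: 'o => nat. An algebra is a carrier set with an interpretation of the
  operation symbols on lists of arguments.\<close>

record ('o, 'a) alg =
  car :: "'a set"
  ops :: "'o \<Rightarrow> 'a list \<Rightarrow> 'a"

record ('o, 'a) dmon = "('o, 'a) alg" +
  mul :: "'a \<Rightarrow> 'a \<Rightarrow> 'a"
  one :: "'a"

datatype 'o trm = Var nat | Op 'o "'o trm list"

fun eval_trm :: "('o \<Rightarrow> 'a list \<Rightarrow> 'a) \<Rightarrow> (nat \<Rightarrow> 'a) \<Rightarrow> 'o trm \<Rightarrow> 'a" where
  "eval_trm f \<rho> (Var n) = \<rho> n"
| "eval_trm f \<rho> (Op c ts) = f c (map (eval_trm f \<rho>) ts)"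

fun wf_trm :: "('o \<Rightarrow> nat) \<Rightarrow> 'o trm \<Rightarrow> bool" where
  "wf_trm ar (Var n) = True"
| "wf_trm ar (Op c ts) = (length ts = ar c \<and> list_all (wf_trm ar) ts)"

text \<open>A variety is presented by a set of (well-formed) equations.\<close>
definition variety :: "('o \<Rightarrow> nat) \<Rightarrow> ('o trm \<times> 'o trm) set \<Rightarrow> bool" where
  "variety ar Eqs \<longleftrightarrow> (\<forall>(s,t)\<in>Eqs. wf_trm ar s \<and> wf_trm ar t)"

definition closed_alg :: "('o \<Rightarrow> nat) \<Rightarrow> ('o, 'a, 'z) alg_scheme \<Rightarrow> bool" where
  "closed_alg ar A \<longleftrightarrow>
     (\<forall>c xs. length xs = ar c \<and> set xs \<subseteq> car A \<longrightarrow> ops A c xs \<in> car A)"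

definition in_var :: "('o \<Rightarrow> nat) \<Rightarrow> ('o trm \<times> 'o trm) set \<Rightarrow> ('o, 'a, 'z) alg_scheme \<Rightarrow> bool" where
  "in_var ar Eqs A \<longleftrightarrow> closed_alg ar A \<and>
     (\<forall>(s,t)\<in>Eqs. \<forall>\<rho>. (\<forall>n. \<rho> n \<in> car A) \<longrightarrow> eval_trm (ops A) \<rho> s = eval_trm (ops A) \<rho> t)"

definition hom :: "('o \<Rightarrow> nat) \<Rightarrow> ('o, 'a, 'z) alg_scheme \<Rightarrow> ('o, 'b, 'w) alg_scheme \<Rightarrow> ('a \<Rightarrow> 'b) \<Rightarrow> bool" where
  "hom ar A B h \<longleftrightarrow> (\<forall>x\<in>car A. h x \<in> car B) \<and>
     (\<forall>c xs. length xs = ar c \<and> set xs \<subseteq> car A \<longrightarrow> h (ops A c xs) = ops B c (map h xs))"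

text \<open>The hom-set D(A,B) is a subalgebra of the power B^|A|: closed under the
  pointwise operations.\<close>
definition homs_subalg :: "('o \<Rightarrow> nat) \<Rightarrow> ('o, 'a, 'z) alg_scheme \<Rightarrow> ('o, 'b, 'w) alg_scheme \<Rightarrow> bool" where
  "homs_subalg ar A B \<longleftrightarrow>
     (\<forall>c hs. length hs = ar c \<and> (\<forall>h\<in>set hs. hom ar A B h) \<longrightarrow>
        hom ar A B (\<lambda>x. ops B c (map (\<lambda>h. h x) hs)))"

text \<open>Commutativity of the variety, for algebras whose carriers live in the types 'u, 'v.\<close>
definition comm_variety :: "('o \<Rightarrow> nat) \<Rightarrow> ('o trm \<times> 'o trm) set \<Rightarrow> 'u itself \<Rightarrow> 'v itself \<Rightarrow> bool" where
  "comm_variety ar Eqs TU TV \<longleftrightarrow> variety ar Eqs \<and>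
     (\<forall>(A::('o,'u) alg) (B::('o,'v) alg). in_var ar Eqs A \<and> in_var ar Eqs B \<longrightarrow> homs_subalg ar A B)"

text \<open>D-monoids: algebras of D with a monoid structure whose multiplication is a bimorphism.\<close>
definition is_dmon :: "('o \<Rightarrow> nat) \<Rightarrow> ('o trm \<times> 'o trm) set \<Rightarrow> ('o, 'a, 'z) dmon_scheme \<Rightarrow> bool" where
  "is_dmon ar Eqs M \<longleftrightarrow> in_var ar Eqs M \<and> one M \<in> car M \<and>
     (\<forall>x\<in>car M. \<forall>y\<in>car M. mul M x y \<in> car M) \<and>
     (\<forall>x\<in>car M. \<forall>y\<in>car M. \<forall>z\<in>car M. mul M (mul M x y) z = mul M x (mul M y z)) \<and>
     (\<forall>x\<in>car M. mul M (one M) x = x \<and> mul M x (one M) = x) \<and>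
     (\<forall>a\<in>car M. hom ar M M (mul M a) \<and> hom ar M M (\<lambda>b. mul M b a))"

definition dmon_hom :: "('o \<Rightarrow> nat) \<Rightarrow> ('o, 'a, 'z) dmon_scheme \<Rightarrow> ('o, 'b, 'w) dmon_scheme \<Rightarrow> ('a \<Rightarrow> 'b) \<Rightarrow> bool" where
  "dmon_hom ar M N h \<longleftrightarrow> hom ar M N h \<and> h (one M) = one N \<and>
     (\<forall>x\<in>car M. \<forall>y\<in>car M. h (mul M x y) = mul N (h x) (h y))"

text \<open>F (with unit eta : X -> F) is the free D-monoid on X, universal property
  with respect to D-monoids carried by the type 'm.\<close>
definition free_dmon :: "('o \<Rightarrow> nat) \<Rightarrow> ('o trm \<times> 'o trm) set \<Rightarrow> ('o, 'x) alg \<Rightarrow> ('o, 'a) dmon \<Rightarrow> ('x \<Rightarrow> 'a) \<Rightarrow> 'm itself \<Rightarrow> bool" where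
  "free_dmon ar Eqs X F \<eta> TM \<longleftrightarrow> in_var ar Eqs X \<and> is_dmon ar Eqs F \<and> hom ar X F \<eta> \<and>
     (\<forall>(M::('o,'m) dmon) g. is_dmon ar Eqs M \<and> hom ar X M g \<longrightarrow>
        (\<exists>g'. dmon_hom ar F M g' \<and> (\<forall>x\<in>car X. g' (\<eta> x) = g x) \<and>
           (\<forall>g''. dmon_hom ar F M g'' \<and> (\<forall>x\<in>car X. g'' (\<eta> x) = g x) \<longrightarrow>
              (\<forall>u\<in>car F. g'' u = g' u))))"

definition syn_cong :: "('o, 'a) dmon \<Rightarrow> ('a \<Rightarrow> 'y) \<Rightarrow> ('a \<times> 'a) set" where
  "syn_cong F L = {(u,v). u \<in> car F \<and> v \<in> car F \<and>
     (\<forall>x\<in>car F. \<forall>y\<in>car F. L (mul F x (mul F u y)) = L (mul F x (mul F v y)))}"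

definition rep_cls :: "'a set \<Rightarrow> 'a" where
  "rep_cls C = (SOME u. u \<in> C)"

text \<open>The quotient X^* / E, i.e. the coequalizer of the projections l, r : E -> X^*.\<close>
definition syn_mon :: "('o, 'a) dmon \<Rightarrow> ('a \<Rightarrow> 'y) \<Rightarrow> ('o, 'a set) dmon" where
  "syn_mon F L = (let E = syn_cong F L in
     \<lparr> car = car F // E,
       ops = (\<lambda>c Cs. E `` {ops F c (map rep_cls Cs)}),
       mul = (\<lambda>C D. E `` {mul F (rep_cls C) (rep_cls D)}),
       one = E `` {one F} \<rparr>)"

definition syn_map :: "('o, 'a) dmon \<Rightarrow> ('a \<Rightarrow> 'y) \<Rightarrow> 'a \<Rightarrow> 'a set" where
  "syn_map F L u = syn_cong F L `` {u}"

end

theory Submission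
  imports Defs
begin


context
  fixes ar :: "'o \<Rightarrow> nat" and Eqs :: "('o trm \<times> 'o trm) set"
    and F :: "('o,'a) dmon" and Y :: "('o,'y) alg" and L :: "'a \<Rightarrow> 'y"
  assumes F: "is_dmon ar Eqs F" and LH: "hom ar F Y L"
begin

lemma Fone: "one F \<in> car F" using F unfolding is_dmon_def by blast
lemma Fmul: "x \<in> car F \<Longrightarrow> y \<in> car F \<Longrightarrow> mul F x y \<in> car F" using F unfolding is_dmon_def by blast
lemma Fassoc: "x \<in> car F \<Longrightarrow> y \<in> car F \<Longrightarrow> z \<in> car F \<Longrightarrow> mul F (mul F x y) z = mul F x (mul F y z)"
  using F unfolding is_dmon_def by blast
lemma Funit: "x \<in> car F \<Longrightarrow> mul F (one F) x = x \<and> mul F x (one F) = x" using F unfolding is_dmon_def by blast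
lemma Fhl: "a \<in> car F \<Longrightarrow> hom ar F F (mul F a)" using F unfolding is_dmon_def by blast
lemma Fhr: "a \<in> car F \<Longrightarrow> hom ar F F (\<lambda>b. mul F b a)" using F unfolding is_dmon_def by blast
lemma Fclosed: "length xs = ar c \<Longrightarrow> set xs \<subseteq> car F \<Longrightarrow> ops F c xs \<in> car F"
  using F unfolding is_dmon_def in_var_def closed_alg_def by blast
lemma Lcar: "u \<in> car F \<Longrightarrow> L u \<in> car Y" using LH unfolding hom_def by blast
lemma Lops: "length xs = ar c \<Longrightarrow> set xs \<subseteq> car F \<Longrightarrow> L (ops F c xs) = ops Y c (map L xs)"
  using LH unfolding hom_def by blast

lemma E_mem: "(u,v) \<in> syn_cong F L \<longleftrightarrow> u \<in> car F \<and> v \<in> car F \<and>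
     (\<forall>x\<in>car F. \<forall>y\<in>car F. L (mul F x (mul F u y)) = L (mul F x (mul F v y)))"
  unfolding syn_cong_def by simp

lemma E_equiv: "equiv (car F) (syn_cong F L)"
  unfolding equiv_def refl_on_def sym_def trans_def syn_cong_def by auto

lemma E_L: "(u,v) \<in> syn_cong F L \<Longrightarrow> L u = L v"
  using Fone Funit unfolding E_mem by metis

lemma E_mulL: "(u,v) \<in> syn_cong F L \<Longrightarrow> w \<in> car F \<Longrightarrow> (mul F w u, mul F w v) \<in> syn_cong F L"
  unfolding E_mem
proof (intro conjI ballI)
  fix x y assume a: "u \<in> car F \<and> v \<in> car F \<and> (\<forall>x\<in>car F. \<forall>y\<in>car F. L (mul F x (mul F u y)) = L (mul F x (mul F v y)))"
    and w: "w \<in> car F" and xy: "x \<in> car F" "y \<in> car F"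
  show "mul F w u \<in> car F" "mul F w v \<in> car F" using a w Fmul by auto
  have "L (mul F x (mul F (mul F w u) y)) = L (mul F (mul F x w) (mul F u y))"
    using a w xy by (simp add: Fassoc Fmul)
  also have "\<dots> = L (mul F (mul F x w) (mul F v y))" using a w xy Fmul by blast
  also have "\<dots> = L (mul F x (mul F (mul F w v) y))"
    using a w xy by (simp add: Fassoc Fmul)
  finally show "L (mul F x (mul F (mul F w u) y)) = L (mul F x (mul F (mul F w v) y))" .
qed

lemma E_mulR: "(u,v) \<in> syn_cong F L \<Longrightarrow> w \<in> car F \<Longrightarrow> (mul F u w, mul F v w) \<in> syn_cong F L"
  unfolding E_mem
proof (intro conjI ballI)
  fix x y assume a: "u \<in> car F \<and> v \<in> car F \<and> (\<forall>x\<in>car F. \<forall>y\<in>car F. L (mul F x (mul F u y)) = L (mul F x (mul F v y)))"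
    and w: "w \<in> car F" and xy: "x \<in> car F" "y \<in> car F"
  show "mul F u w \<in> car F" "mul F v w \<in> car F" using a w Fmul by auto
  have "L (mul F x (mul F (mul F u w) y)) = L (mul F x (mul F u (mul F w y)))"
    using a w xy by (simp add: Fassoc Fmul)
  also have "\<dots> = L (mul F x (mul F v (mul F w y)))" using a w xy Fmul by blast
  also have "\<dots> = L (mul F x (mul F (mul F v w) y))"
    using a w xy by (simp add: Fassoc Fmul)
  finally show "L (mul F x (mul F (mul F u w) y)) = L (mul F x (mul F (mul F v w) y))" .
qed

lemma E_mul: "(u,v) \<in> syn_cong F L \<Longrightarrow> (u',v') \<in> syn_cong F L \<Longrightarrow> (mul F u u', mul F v v') \<in> syn_cong F L"
proof -
  assume a: "(u,v) \<in> syn_cong F L" "(u',v') \<in> syn_cong F L"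
  then have "(mul F u u', mul F v u') \<in> syn_cong F L" using E_mulR E_mem by blast
  moreover have "(mul F v u', mul F v v') \<in> syn_cong F L" using a E_mulL E_mem by blast
  ultimately show ?thesis using E_equiv unfolding equiv_def trans_def by blast
qed

lemma L_ops_ctx: assumes "length zs = ar c" "set zs \<subseteq> car F" "x \<in> car F" "y \<in> car F"
  shows "L (mul F x (mul F (ops F c zs) y)) = ops Y c (map (\<lambda>u. L (mul F x (mul F u y))) zs)"
proof -
  have 1: "mul F (ops F c zs) y = ops F c (map (\<lambda>u. mul F u y) zs)"
    using Fhr[OF assms(4)] assms unfolding hom_def by blast
  have s1: "set (map (\<lambda>u. mul F u y) zs) \<subseteq> car F" using assms Fmul by auto
  have 2: "mul F x (ops F c (map (\<lambda>u. mul F u y) zs)) = ops F c (map (\<lambda>u. mul F x (mul F u y)) zs)"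
    using Fhl[OF assms(3)] assms s1 unfolding hom_def by (simp add: o_def)
  have s2: "set (map (\<lambda>u. mul F x (mul F u y)) zs) \<subseteq> car F" using assms Fmul by auto
  show ?thesis unfolding 1 2 using Lops[OF _ s2] assms by (simp add: o_def)
qed

lemma E_ops: assumes "length us = ar c" "list_all2 (\<lambda>u v. (u,v) \<in> syn_cong F L) us vs"
  shows "(ops F c us, ops F c vs) \<in> syn_cong F L"
proof -
  have len: "length vs = length us" using assms(2) list_all2_lengthD by metis
  have nth: "\<And>i. i < length us \<Longrightarrow> (us!i, vs!i) \<in> syn_cong F L"
    using assms(2) list_all2_conv_all_nth by metis
  have su: "set us \<subseteq> car F" using nth E_mem by (metis in_set_conv_nth subsetI)
  have sv: "set vs \<subseteq> car F" using nth E_mem len by (metis in_set_conv_nth subsetI)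
  show ?thesis unfolding E_mem
  proof (intro conjI ballI)
    show "ops F c us \<in> car F" "ops F c vs \<in> car F" using Fclosed su sv assms(1) len by auto
    fix x y assume xy: "x \<in> car F" "y \<in> car F"
    have "map (\<lambda>u. L (mul F x (mul F u y))) us = map (\<lambda>u. L (mul F x (mul F u y))) vs"
      by (rule nth_equalityI) (use len nth xy E_mem in auto)
    then show "L (mul F x (mul F (ops F c us) y)) = L (mul F x (mul F (ops F c vs) y))"
      using L_ops_ctx[OF assms(1) su xy] L_ops_ctx[OF _ sv xy] assms(1) len by simp
  qed
qed

lemma rep_class: "u \<in> car F \<Longrightarrow> (u, rep_cls (syn_cong F L `` {u})) \<in> syn_cong F L"
proof -
  assume u: "u \<in> car F"
  have "u \<in> syn_cong F L `` {u}" using u E_equiv equiv_class_self by metis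
  then have "rep_cls (syn_cong F L `` {u}) \<in> syn_cong F L `` {u}"
    unfolding rep_cls_def by (rule someI)
  then show ?thesis by simp
qed

lemma rep_quot: "C \<in> car F // syn_cong F L \<Longrightarrow> rep_cls C \<in> car F \<and> C = syn_cong F L `` {rep_cls C}"
proof -
  assume "C \<in> car F // syn_cong F L"
  then obtain u where u: "u \<in> car F" "C = syn_cong F L `` {u}" by (auto elim: quotientE)
  have r: "(u, rep_cls C) \<in> syn_cong F L" using rep_class u by simp
  then have A: "rep_cls C \<in> car F" using E_mem by blast
  have B: "syn_cong F L `` {u} = syn_cong F L `` {rep_cls C}"
    using r by (rule equiv_class_eq[OF E_equiv])
  have "C = syn_cong F L `` {rep_cls C}" using u(2) B by (rule trans)
  then show ?thesis using A by (rule conjI[rotated])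
qed

lemma class_eq: "(u,v) \<in> syn_cong F L \<Longrightarrow> syn_cong F L `` {u} = syn_cong F L `` {v}"
  using E_equiv equiv_class_eq by metis

lemma class_eq_iff: "u \<in> car F \<Longrightarrow> v \<in> car F \<Longrightarrow> syn_cong F L `` {u} = syn_cong F L `` {v} \<longleftrightarrow> (u,v) \<in> syn_cong F L"
  using E_equiv eq_equiv_class_iff by metis

lemma Q_car: "car (syn_mon F L) = car F // syn_cong F L" by (simp add: syn_mon_def Let_def)
lemma Q_ops: "ops (syn_mon F L) c Cs = syn_cong F L `` {ops F c (map rep_cls Cs)}" by (simp add: syn_mon_def Let_def)
lemma Q_mul: "mul (syn_mon F L) C D = syn_cong F L `` {mul F (rep_cls C) (rep_cls D)}" by (simp add: syn_mon_def Let_def)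
lemma Q_one: "one (syn_mon F L) = syn_cong F L `` {one F}" by (simp add: syn_mon_def Let_def)

lemma class_in: "u \<in> car F \<Longrightarrow> syn_cong F L `` {u} \<in> car F // syn_cong F L"
  by (rule quotientI)

lemma Q_ops_cls: assumes "length us = ar c" "set us \<subseteq> car F"
  shows "ops (syn_mon F L) c (map (\<lambda>u. syn_cong F L `` {u}) us) = syn_cong F L `` {ops F c us}"
proof -
  have "list_all2 (\<lambda>u v. (u,v) \<in> syn_cong F L) us (map rep_cls (map (\<lambda>u. syn_cong F L `` {u}) us))"
    unfolding list_all2_conv_all_nth using assms by (auto intro!: rep_class)
  then have "(ops F c us, ops F c (map rep_cls (map (\<lambda>u. syn_cong F L `` {u}) us))) \<in> syn_cong F L"
    using E_ops assms(1) by blast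
  then show ?thesis unfolding Q_ops using class_eq by metis
qed

lemma Q_ops_gen: assumes "length Cs = ar c" "set Cs \<subseteq> car F // syn_cong F L"
  shows "ops (syn_mon F L) c Cs = syn_cong F L `` {ops F c (map rep_cls Cs)}
         \<and> ops F c (map rep_cls Cs) \<in> car F"
proof -
  have "set (map rep_cls Cs) \<subseteq> car F" using assms rep_quot by auto
  then show ?thesis using assms Fclosed Q_ops by auto
qed

lemma Q_mul_cls: "u \<in> car F \<Longrightarrow> v \<in> car F \<Longrightarrow>
   mul (syn_mon F L) (syn_cong F L `` {u}) (syn_cong F L `` {v}) = syn_cong F L `` {mul F u v}"
  unfolding Q_mul using E_mul rep_class class_eq E_equiv
  by (metis equiv_def sym_def)

lemma list_cls: "set xs \<subseteq> car F // syn_cong F L \<Longrightarrow>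
   xs = map (\<lambda>u. syn_cong F L `` {u}) (map rep_cls xs) \<and> set (map rep_cls xs) \<subseteq> car F"
proof -
  assume a: "set xs \<subseteq> car F // syn_cong F L"
  have "map (\<lambda>u. syn_cong F L `` {u}) (map rep_cls xs) = xs"
  proof (rule nth_equalityI)
    fix i assume "i < length (map (\<lambda>u. syn_cong F L `` {u}) (map rep_cls xs))"
    then have i: "i < length xs" by simp
    then have "xs!i \<in> car F // syn_cong F L" using a nth_mem by blast
    then show "map (\<lambda>u. syn_cong F L `` {u}) (map rep_cls xs) ! i = xs ! i"
      using rep_quot i by (metis (no_types, lifting) length_map nth_map)
  qed simp
  then show ?thesis using a rep_quot by auto
qed

lemma eval_Q: fixes \<rho> :: "nat \<Rightarrow> 'a set" shows "wf_trm ar t \<Longrightarrow> (\<forall>n. \<rho> n \<in> car F // syn_cong F L) \<Longrightarrow>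
   eval_trm (ops (syn_mon F L)) \<rho> t = syn_cong F L `` {eval_trm (ops F) (rep_cls \<circ> \<rho>) t}
   \<and> eval_trm (ops F) (rep_cls \<circ> \<rho>) t \<in> car F"
proof (induction t)
  case (Var n)
  then show ?case using rep_quot by simp
next
  case (Op c ts)
  have len: "length ts = ar c" and wf: "\<forall>t\<in>set ts. wf_trm ar t" using Op.prems by (auto simp: list_all_iff)
  have IH: "\<And>t. t \<in> set ts \<Longrightarrow> eval_trm (ops (syn_mon F L)) \<rho> t = syn_cong F L `` {eval_trm (ops F) (rep_cls \<circ> \<rho>) t}
   \<and> eval_trm (ops F) (rep_cls \<circ> \<rho>) t \<in> car F" using Op wf by blast
  have m: "map (eval_trm (ops (syn_mon F L)) \<rho>) ts = map (\<lambda>u. syn_cong F L `` {u}) (map (eval_trm (ops F) (rep_cls \<circ> \<rho>)) ts)"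
    using IH by simp
  have s: "set (map (eval_trm (ops F) (rep_cls \<circ> \<rho>)) ts) \<subseteq> car F" using IH by auto
  have "eval_trm (ops (syn_mon F L)) \<rho> (Op c ts) = ops (syn_mon F L) c (map (eval_trm (ops (syn_mon F L)) \<rho>) ts)" by simp
  also have "\<dots> = syn_cong F L `` {ops F c (map (eval_trm (ops F) (rep_cls \<circ> \<rho>)) ts)}"
    unfolding m by (rule Q_ops_cls[OF _ s]) (simp add: len)
  finally show ?case using Fclosed[OF _ s] len by (simp add: comp_def)
qed

lemma Q_dmon: assumes var: "variety ar Eqs" shows "is_dmon ar Eqs (syn_mon F L)"
proof -
  have cl: "closed_alg ar (syn_mon F L)"
    unfolding closed_alg_def Q_car
  proof (intro allI impI)
    fix c xs assume "length xs = ar c \<and> set xs \<subseteq> car F // syn_cong F L"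
    then show "ops (syn_mon F L) c xs \<in> car F // syn_cong F L" using Q_ops_gen[of xs c] class_in by simp
  qed
  have eqs: "\<forall>(s,t)\<in>Eqs. \<forall>\<rho>. (\<forall>n. \<rho> n \<in> car (syn_mon F L)) \<longrightarrow>
      eval_trm (ops (syn_mon F L)) \<rho> s = eval_trm (ops (syn_mon F L)) \<rho> t"
  proof (intro ballI allI impI, clarify)
    fix s t and \<rho> :: "nat \<Rightarrow> 'a set" assume st: "(s,t) \<in> Eqs" and r: "\<forall>n. \<rho> n \<in> car (syn_mon F L)"
    have wf: "wf_trm ar s" "wf_trm ar t" using var st unfolding variety_def by auto
    have r': "\<forall>n. \<rho> n \<in> car F // syn_cong F L" using r Q_car by simp
    have "\<forall>n. (rep_cls \<circ> \<rho>) n \<in> car F" using r' rep_quot by simp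
    then have "eval_trm (ops F) (rep_cls \<circ> \<rho>) s = eval_trm (ops F) (rep_cls \<circ> \<rho>) t"
      using F st unfolding is_dmon_def in_var_def by blast
    then show "eval_trm (ops (syn_mon F L)) \<rho> s = eval_trm (ops (syn_mon F L)) \<rho> t"
      using eval_Q[OF wf(1) r'] eval_Q[OF wf(2) r'] by simp
  qed
  have cls_all: "\<And>C. C \<in> car (syn_mon F L) \<Longrightarrow> \<exists>u\<in>car F. C = syn_cong F L `` {u}"
    using Q_car rep_quot by metis
  have mulc: "\<forall>x\<in>car (syn_mon F L). \<forall>y\<in>car (syn_mon F L). mul (syn_mon F L) x y \<in> car (syn_mon F L)"
  proof (intro ballI)
    fix x y assume "x \<in> car (syn_mon F L)" "y \<in> car (syn_mon F L)"
    then obtain u v where "u \<in> car F" "v \<in> car F" "x = syn_cong F L `` {u}"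
      "y = syn_cong F L `` {v}" using cls_all by metis
    then show "mul (syn_mon F L) x y \<in> car (syn_mon F L)" by (simp add: Q_mul_cls Fmul class_in Q_car)
  qed
  have assoc: "\<forall>x\<in>car (syn_mon F L). \<forall>y\<in>car (syn_mon F L). \<forall>z\<in>car (syn_mon F L).
     mul (syn_mon F L) (mul (syn_mon F L) x y) z = mul (syn_mon F L) x (mul (syn_mon F L) y z)"
  proof (intro ballI)
    fix x y z assume "x \<in> car (syn_mon F L)" "y \<in> car (syn_mon F L)" "z \<in> car (syn_mon F L)"
    then obtain u v w where "u \<in> car F" "v \<in> car F" "w \<in> car F" "x = syn_cong F L `` {u}"
      "y = syn_cong F L `` {v}" "z = syn_cong F L `` {w}" using cls_all by metis
    then show "mul (syn_mon F L) (mul (syn_mon F L) x y) z = mul (syn_mon F L) x (mul (syn_mon F L) y z)"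
      by (simp add: Q_mul_cls Fmul Fassoc)
  qed
  have unit: "\<forall>x\<in>car (syn_mon F L). mul (syn_mon F L) (one (syn_mon F L)) x = x \<and> mul (syn_mon F L) x (one (syn_mon F L)) = x"
  proof
    fix x assume "x \<in> car (syn_mon F L)"
    then obtain u where "u \<in> car F" "x = syn_cong F L `` {u}" using cls_all by metis
    then show "mul (syn_mon F L) (one (syn_mon F L)) x = x \<and> mul (syn_mon F L) x (one (syn_mon F L)) = x"
      by (simp add: Q_one Q_mul_cls Fone Funit)
  qed
  have homs: "\<forall>a\<in>car (syn_mon F L). hom ar (syn_mon F L) (syn_mon F L) (mul (syn_mon F L) a) \<and>
      hom ar (syn_mon F L) (syn_mon F L) (\<lambda>b. mul (syn_mon F L) b a)"
  proof
    fix a assume "a \<in> car (syn_mon F L)"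
    then obtain a0 where a0: "a0 \<in> car F" "a = syn_cong F L `` {a0}" using cls_all by metis
    have h1: "hom ar (syn_mon F L) (syn_mon F L) (mul (syn_mon F L) a)"
      unfolding hom_def
    proof (intro conjI allI impI ballI)
      fix x assume "x \<in> car (syn_mon F L)" then show "mul (syn_mon F L) a x \<in> car (syn_mon F L)"
        using mulc \<open>a \<in> car (syn_mon F L)\<close> by blast
    next
      fix c xs assume "length xs = ar c \<and> set xs \<subseteq> car (syn_mon F L)"
      then have len: "length xs = ar c" and sx: "set xs \<subseteq> car F // syn_cong F L" using Q_car by auto
      define us where "us = map rep_cls xs"
      have xs: "xs = map (\<lambda>u. syn_cong F L `` {u}) us" and su: "set us \<subseteq> car F"
        using list_cls[OF sx] us_def by auto
      have lu: "length us = ar c" using len us_def by simp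
      have s2: "set (map (mul F a0) us) \<subseteq> car F" using su a0 Fmul by auto
      have "mul (syn_mon F L) a (ops (syn_mon F L) c xs) = syn_cong F L `` {mul F a0 (ops F c us)}"
        unfolding xs a0(2) Q_ops_cls[OF lu su] using Q_mul_cls a0 Fclosed lu su by simp
      also have "mul F a0 (ops F c us) = ops F c (map (mul F a0) us)"
        using Fhl[OF a0(1)] lu su unfolding hom_def by blast
      also have "syn_cong F L `` {ops F c (map (mul F a0) us)} =
          ops (syn_mon F L) c (map (\<lambda>u. syn_cong F L `` {u}) (map (mul F a0) us))"
        using Q_ops_cls[OF _ s2] lu by simp
      also have "map (\<lambda>u. syn_cong F L `` {u}) (map (mul F a0) us) = map (mul (syn_mon F L) a) xs"
        unfolding xs a0(2) using su a0 Q_mul_cls by auto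
      finally show "mul (syn_mon F L) a (ops (syn_mon F L) c xs) = ops (syn_mon F L) c (map (mul (syn_mon F L) a) xs)" .
    qed
    have h2: "hom ar (syn_mon F L) (syn_mon F L) (\<lambda>b. mul (syn_mon F L) b a)"
      unfolding hom_def
    proof (intro conjI allI impI ballI)
      fix x assume "x \<in> car (syn_mon F L)" then show "mul (syn_mon F L) x a \<in> car (syn_mon F L)"
        using mulc \<open>a \<in> car (syn_mon F L)\<close> by blast
    next
      fix c xs assume "length xs = ar c \<and> set xs \<subseteq> car (syn_mon F L)"
      then have len: "length xs = ar c" and sx: "set xs \<subseteq> car F // syn_cong F L" using Q_car by auto
      define us where "us = map rep_cls xs"
      have xs: "xs = map (\<lambda>u. syn_cong F L `` {u}) us" and su: "set us \<subseteq> car F"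
        using list_cls[OF sx] us_def by auto
      have lu: "length us = ar c" using len us_def by simp
      have s2: "set (map (\<lambda>b. mul F b a0) us) \<subseteq> car F" using su a0 Fmul by auto
      have "mul (syn_mon F L) (ops (syn_mon F L) c xs) a = syn_cong F L `` {mul F (ops F c us) a0}"
        unfolding xs a0(2) Q_ops_cls[OF lu su] using Q_mul_cls a0 Fclosed lu su by simp
      also have "mul F (ops F c us) a0 = ops F c (map (\<lambda>b. mul F b a0) us)"
        using Fhr[OF a0(1)] lu su unfolding hom_def by blast
      also have "syn_cong F L `` {ops F c (map (\<lambda>b. mul F b a0) us)} =
          ops (syn_mon F L) c (map (\<lambda>u. syn_cong F L `` {u}) (map (\<lambda>b. mul F b a0) us))"
        using Q_ops_cls[OF _ s2] lu by simp
      also have "map (\<lambda>u. syn_cong F L `` {u}) (map (\<lambda>b. mul F b a0) us) = map (\<lambda>b. mul (syn_mon F L) b a) xs"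
        unfolding xs a0(2) using su a0 Q_mul_cls by auto
      finally show "mul (syn_mon F L) (ops (syn_mon F L) c xs) a = ops (syn_mon F L) c (map (\<lambda>b. mul (syn_mon F L) b a) xs)" .
    qed
    show "hom ar (syn_mon F L) (syn_mon F L) (mul (syn_mon F L) a) \<and>
      hom ar (syn_mon F L) (syn_mon F L) (\<lambda>b. mul (syn_mon F L) b a)" using h1 h2 by blast
  qed
  have one: "one (syn_mon F L) \<in> car (syn_mon F L)" by (simp add: Q_one Q_car class_in Fone)
  show ?thesis unfolding is_dmon_def in_var_def
    using cl eqs mulc assoc unit homs one by blast
qed

lemma rep_resp: "\<forall>(u,v)\<in>syn_cong F L. g u = g v \<Longrightarrow> u \<in> car F \<Longrightarrow> g (rep_cls (syn_cong F L `` {u})) = g u"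
  using rep_class by fastforce

lemma synmap_hom: "dmon_hom ar F (syn_mon F L) (syn_map F L)"
  unfolding dmon_hom_def hom_def syn_map_def
  using class_in Q_car Q_ops_cls Q_one Q_mul_cls by (auto simp: o_def)

lemma synmap_surj: "syn_map F L ` car F = car (syn_mon F L)"
  by (auto simp: syn_map_def Q_car quotient_def)

lemma synmap_resp: "\<forall>(u,v)\<in>syn_cong F L. syn_map F L u = syn_map F L v"
  unfolding syn_map_def using class_eq by blast

lemma hom_Q: assumes g: "hom ar F B g" and r: "\<forall>(u,v)\<in>syn_cong F L. g u = g v"
  shows "hom ar (syn_mon F L) B (\<lambda>C. g (rep_cls C))"
  unfolding hom_def
proof (intro conjI allI impI ballI)
  fix C assume "C \<in> car (syn_mon F L)"
  then show "g (rep_cls C) \<in> car B" using rep_quot Q_car g unfolding hom_def by metis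
next
  fix c Cs assume a: "length Cs = ar c \<and> set Cs \<subseteq> car (syn_mon F L)"
  then have Q: "ops (syn_mon F L) c Cs = syn_cong F L `` {ops F c (map rep_cls Cs)}"
    and inF: "ops F c (map rep_cls Cs) \<in> car F" using Q_ops_gen Q_car by auto
  have s: "set (map rep_cls Cs) \<subseteq> car F" using a rep_quot Q_car by auto
  have "g (rep_cls (ops (syn_mon F L) c Cs)) = g (ops F c (map rep_cls Cs))"
    unfolding Q using rep_resp[OF r inF] .
  also have "\<dots> = ops B c (map g (map rep_cls Cs))" using g a s unfolding hom_def by simp
  finally show "g (rep_cls (ops (syn_mon F L) c Cs)) = ops B c (map (\<lambda>C. g (rep_cls C)) Cs)" by (simp add: comp_def)
qed

lemma k_hom: assumes g: "dmon_hom ar F N g" and r: "\<forall>(u,v)\<in>syn_cong F L. g u = g v"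
  shows "dmon_hom ar (syn_mon F L) N (\<lambda>C. g (rep_cls C))"
proof -
  have h: "hom ar F N g" using g unfolding dmon_hom_def by blast
  have one: "g (rep_cls (one (syn_mon F L))) = one N"
    using rep_resp[OF r Fone] g unfolding Q_one dmon_hom_def by simp
  have mul: "\<forall>x\<in>car (syn_mon F L). \<forall>y\<in>car (syn_mon F L).
     g (rep_cls (mul (syn_mon F L) x y)) = mul N (g (rep_cls x)) (g (rep_cls y))"
  proof (intro ballI)
    fix x y assume "x \<in> car (syn_mon F L)" "y \<in> car (syn_mon F L)"
    then have xy: "rep_cls x \<in> car F" "rep_cls y \<in> car F" using rep_quot Q_car by auto
    show "g (rep_cls (mul (syn_mon F L) x y)) = mul N (g (rep_cls x)) (g (rep_cls y))"
      unfolding Q_mul using rep_resp[OF r Fmul[OF xy]] g xy unfolding dmon_hom_def by simp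
  qed
  show ?thesis unfolding dmon_hom_def using hom_Q[OF h r] one mul by blast
qed

lemma k_unique: assumes "\<forall>u\<in>car F. g u = k' (syn_map F L u)" "C \<in> car (syn_mon F L)"
  shows "k' C = g (rep_cls C)"
  using assms rep_quot Q_car unfolding syn_map_def by metis

lemma h_part:
  fixes M :: "('o,'b) dmon"
  assumes e: "dmon_hom ar F M e" and es: "e ` car F = car M"
    and f: "hom ar M Y f" and Lf: "\<forall>u\<in>car F. L u = f (e u)"
  shows "\<exists>h. dmon_hom ar M (syn_mon F L) h \<and> h ` car M = car (syn_mon F L)
                  \<and> (\<forall>u\<in>car F. syn_map F L u = h (e u))
                  \<and> (\<forall>m\<in>car M. f m = L (rep_cls (h m)))
                  \<and> (\<forall>h'. dmon_hom ar M (syn_mon F L) h' \<and> (\<forall>u\<in>car F. syn_map F L u = h' (e u))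
                         \<longrightarrow> (\<forall>m\<in>car M. h' m = h m))"
proof -
  have eh: "hom ar F M e" and e1: "e (one F) = one M"
    and em: "\<And>x y. x \<in> car F \<Longrightarrow> y \<in> car F \<Longrightarrow> e (mul F x y) = mul M (e x) (e y)"
    using e unfolding dmon_hom_def by auto
  have ecar: "\<And>u. u \<in> car F \<Longrightarrow> e u \<in> car M" using eh unfolding hom_def by blast
  have kerE: "(u,v) \<in> syn_cong F L" if uv: "u \<in> car F" "v \<in> car F" "e u = e v" for u v
    unfolding E_mem
  proof (intro conjI ballI)
    fix x y assume xy: "x \<in> car F" "y \<in> car F"
    have "L (mul F x (mul F u y)) = f (e (mul F x (mul F u y)))"
      using Lf Fmul[OF xy(1) Fmul[OF uv(1) xy(2)]] by blast
    also have "e (mul F x (mul F u y)) = mul M (e x) (mul M (e u) (e y))"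
      using em[OF xy(1) Fmul[OF uv(1) xy(2)]] em[OF uv(1) xy(2)] by simp
    also have "\<dots> = mul M (e x) (mul M (e v) (e y))" using uv(3) by simp
    also have "\<dots> = e (mul F x (mul F v y))"
      using em[OF xy(1) Fmul[OF uv(2) xy(2)]] em[OF uv(2) xy(2)] by simp
    also have "f \<dots> = L (mul F x (mul F v y))"
      using Lf Fmul[OF xy(1) Fmul[OF uv(2) xy(2)]] by metis
    finally show "L (mul F x (mul F u y)) = L (mul F x (mul F v y))" .
  next
    show "u \<in> car F" "v \<in> car F" using uv by auto
  qed
  define sel where "sel m = (SOME u. u \<in> car F \<and> e u = m)" for m
  have sel: "sel m \<in> car F \<and> e (sel m) = m" if "m \<in> car M" for m
  proof -
    have "m \<in> e ` car F" using that es by simp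
    then have "\<exists>u. u \<in> car F \<and> e u = m" by (elim imageE) auto
    then show ?thesis unfolding sel_def by (rule someI_ex)
  qed
  define h where "h m = syn_cong F L `` {sel m}" for m
  have he: "h (e u) = syn_cong F L `` {u}" if "u \<in> car F" for u
  proof -
    have "sel (e u) \<in> car F" "e (sel (e u)) = e u" using sel ecar that by auto
    then show ?thesis unfolding h_def using class_eq kerE that by blast
  qed
  have hcar: "h m \<in> car (syn_mon F L)" if "m \<in> car M" for m
    unfolding h_def Q_car using sel that class_in by blast
  have hhom: "hom ar M (syn_mon F L) h"
    unfolding hom_def
  proof (intro conjI allI impI ballI)
    fix m assume "m \<in> car M" then show "h m \<in> car (syn_mon F L)" by (rule hcar)
  next
    fix c xs assume a: "length xs = ar c \<and> set xs \<subseteq> car M"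
    define us where "us = map sel xs"
    have su: "set us \<subseteq> car F" using a sel us_def by auto
    have xs: "xs = map e us" unfolding us_def
    proof (rule nth_equalityI)
      fix i assume "i < length xs"
      then have "xs ! i \<in> car M" using a nth_mem by blast
      then show "xs ! i = map e (map sel xs) ! i" using sel \<open>i < length xs\<close> by simp
    qed simp
    have lu: "length us = ar c" using a us_def by simp
    have "e (ops F c us) = ops M c (map e us)" using eh lu su unfolding hom_def by blast
    then have "h (ops M c xs) = h (e (ops F c us))" using xs by simp
    also have "\<dots> = syn_cong F L `` {ops F c us}" using he Fclosed lu su by blast
    also have "\<dots> = ops (syn_mon F L) c (map (\<lambda>u. syn_cong F L `` {u}) us)" using Q_ops_cls lu su by simp
    also have "map (\<lambda>u. syn_cong F L `` {u}) us = map h xs" unfolding us_def h_def by simp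
    finally show "h (ops M c xs) = ops (syn_mon F L) c (map h xs)" .
  qed
  have h1: "h (one M) = one (syn_mon F L)" using he[OF Fone] e1 Q_one by simp
  have hm: "\<forall>x\<in>car M. \<forall>y\<in>car M. h (mul M x y) = mul (syn_mon F L) (h x) (h y)"
  proof (intro ballI)
    fix x y assume xy: "x \<in> car M" "y \<in> car M"
    have "h (mul M x y) = h (e (mul F (sel x) (sel y)))" using sel xy em by simp
    also have "\<dots> = syn_cong F L `` {mul F (sel x) (sel y)}" using he Fmul sel xy by blast
    also have "\<dots> = mul (syn_mon F L) (h x) (h y)" unfolding h_def using Q_mul_cls sel xy by simp
    finally show "h (mul M x y) = mul (syn_mon F L) (h x) (h y)" .
  qed
  have hd: "dmon_hom ar M (syn_mon F L) h" unfolding dmon_hom_def using hhom h1 hm by blast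
  have hs: "h ` car M = car (syn_mon F L)"
  proof
    show "h ` car M \<subseteq> car (syn_mon F L)" using hcar by blast
    show "car (syn_mon F L) \<subseteq> h ` car M"
    proof
      fix C assume "C \<in> car (syn_mon F L)"
      then obtain u where "u \<in> car F" "C = syn_cong F L `` {u}" using Q_car rep_quot by metis
      then show "C \<in> h ` car M" by (intro image_eqI[of _ _ "e u"]) (simp_all add: he ecar)
    qed
  qed
  have hsyn: "\<forall>u\<in>car F. syn_map F L u = h (e u)" using he unfolding syn_map_def by simp
  have hf: "\<forall>m\<in>car M. f m = L (rep_cls (h m))"
  proof
    fix m assume m: "m \<in> car M"
    have sm: "sel m \<in> car F" "e (sel m) = m" using sel m by auto
    have "f m = f (e (sel m))" using sm by simp
    also have "\<dots> = L (sel m)" using Lf sm by simp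
    also have "\<dots> = L (rep_cls (h m))" unfolding h_def using E_L[OF rep_class[OF sm(1)]] by simp
    finally show "f m = L (rep_cls (h m))" .
  qed
  have hu: "\<forall>h'. dmon_hom ar M (syn_mon F L) h' \<and> (\<forall>u\<in>car F. syn_map F L u = h' (e u))
                         \<longrightarrow> (\<forall>m\<in>car M. h' m = h m)"
  proof (intro allI impI ballI)
    fix h' m assume a: "dmon_hom ar M (syn_mon F L) h' \<and> (\<forall>u\<in>car F. syn_map F L u = h' (e u))"
      and m: "m \<in> car M"
    have "h' m = h' (e (sel m))" using sel m by simp
    also have "\<dots> = syn_map F L (sel m)" using a sel m by simp
    also have "\<dots> = h m" unfolding syn_map_def h_def ..
    finally show "h' m = h m" .
  qed
  show ?thesis using hd hs hsyn hf hu by blast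
qed

end

theorem mainTheorem8:
  fixes ar :: "'o \<Rightarrow> nat" and Eqs :: "('o trm \<times> 'o trm) set"
    and X :: "('o, 'x) alg" and F :: "('o, 'a) dmon" and \<eta> :: "'x \<Rightarrow> 'a"
    and Y :: "('o, 'y) alg" and L :: "'a \<Rightarrow> 'y"
  assumes comm: "comm_variety ar Eqs TYPE('a) TYPE('a)" "comm_variety ar Eqs TYPE('a) TYPE('y)"
      "comm_variety ar Eqs TYPE('a) TYPE('m)" "comm_variety ar Eqs TYPE('m) TYPE('y)"
      "comm_variety ar Eqs TYPE('m) TYPE('m)" "comm_variety ar Eqs TYPE('x) TYPE('a)"
      "comm_variety ar Eqs TYPE('y) TYPE('y)"
    and free: "free_dmon ar Eqs X F \<eta> TYPE('m)"
    and Y: "in_var ar Eqs Y"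
    and L: "hom ar F Y L"
  shows
    "is_dmon ar Eqs (syn_mon F L)
     \<and> dmon_hom ar F (syn_mon F L) (syn_map F L)
     \<and> syn_map F L ` car F = car (syn_mon F L)
     \<and> (\<forall>(u,v)\<in>syn_cong F L. syn_map F L u = syn_map F L v)
     \<and> (\<forall>(N::('o,'m) dmon) g. is_dmon ar Eqs N \<and> dmon_hom ar F N g
            \<and> (\<forall>(u,v)\<in>syn_cong F L. g u = g v) \<longrightarrow>
          (\<exists>k. dmon_hom ar (syn_mon F L) N k \<and> (\<forall>u\<in>car F. g u = k (syn_map F L u))
             \<and> (\<forall>k'. dmon_hom ar (syn_mon F L) N k' \<and> (\<forall>u\<in>car F. g u = k' (syn_map F L u))
                    \<longrightarrow> (\<forall>C\<in>car (syn_mon F L). k' C = k C))))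
     \<and> (\<exists>fL. hom ar (syn_mon F L) Y fL
          \<and> (\<forall>u\<in>car F. L u = fL (syn_map F L u))
          \<and> (\<forall>f'. hom ar (syn_mon F L) Y f' \<and> (\<forall>u\<in>car F. L u = f' (syn_map F L u))
                 \<longrightarrow> (\<forall>C\<in>car (syn_mon F L). f' C = fL C))
          \<and> (\<forall>(M::('o,'m) dmon) e f.
               is_dmon ar Eqs M \<and> dmon_hom ar F M e \<and> e ` car F = car M
               \<and> hom ar M Y f \<and> (\<forall>u\<in>car F. L u = f (e u)) \<longrightarrow>
               (\<exists>h. dmon_hom ar M (syn_mon F L) h \<and> h ` car M = car (syn_mon F L)
                  \<and> (\<forall>u\<in>car F. syn_map F L u = h (e u))
                  \<and> (\<forall>m\<in>car M. f m = fL (h m))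
                  \<and> (\<forall>h'. dmon_hom ar M (syn_mon F L) h' \<and> (\<forall>u\<in>car F. syn_map F L u = h' (e u))
                         \<longrightarrow> (\<forall>m\<in>car M. h' m = h m)))))"
proof -
  have F: "is_dmon ar Eqs F" using free unfolding free_dmon_def by blast
  have var: "variety ar Eqs" using comm(1) unfolding comm_variety_def by blast
  have LR: "\<forall>(u,v)\<in>syn_cong F L. L u = L v" using E_L[OF F L] by blast
  have univ: "\<forall>(N::('o,'m) dmon) g. is_dmon ar Eqs N \<and> dmon_hom ar F N g
            \<and> (\<forall>(u,v)\<in>syn_cong F L. g u = g v) \<longrightarrow>
          (\<exists>k. dmon_hom ar (syn_mon F L) N k \<and> (\<forall>u\<in>car F. g u = k (syn_map F L u))
             \<and> (\<forall>k'. dmon_hom ar (syn_mon F L) N k' \<and> (\<forall>u\<in>car F. g u = k' (syn_map F L u))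
                    \<longrightarrow> (\<forall>C\<in>car (syn_mon F L). k' C = k C)))"
  proof (intro allI impI)
    fix N :: "('o,'m) dmon" and g
    assume a: "is_dmon ar Eqs N \<and> dmon_hom ar F N g \<and> (\<forall>(u,v)\<in>syn_cong F L. g u = g v)"
    show "\<exists>k. dmon_hom ar (syn_mon F L) N k \<and> (\<forall>u\<in>car F. g u = k (syn_map F L u))
             \<and> (\<forall>k'. dmon_hom ar (syn_mon F L) N k' \<and> (\<forall>u\<in>car F. g u = k' (syn_map F L u))
                    \<longrightarrow> (\<forall>C\<in>car (syn_mon F L). k' C = k C))"
    proof (intro exI[of _ "\<lambda>C. g (rep_cls C)"] conjI allI impI ballI)
      show "dmon_hom ar (syn_mon F L) N (\<lambda>C. g (rep_cls C))" by (rule k_hom[OF F L]) (use a in simp_all)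
      show "g u = g (rep_cls (syn_map F L u))" if "u \<in> car F" for u
        unfolding syn_map_def using rep_resp[OF F L, of g u] a that by simp
      show "k' C = g (rep_cls C)" if "dmon_hom ar (syn_mon F L) N k' \<and> (\<forall>u\<in>car F. g u = k' (syn_map F L u))"
        "C \<in> car (syn_mon F L)" for k' C by (rule k_unique[OF F L]) (use that in simp_all)
    qed
  qed
  have fLp: "\<exists>fL. hom ar (syn_mon F L) Y fL
          \<and> (\<forall>u\<in>car F. L u = fL (syn_map F L u))
          \<and> (\<forall>f'. hom ar (syn_mon F L) Y f' \<and> (\<forall>u\<in>car F. L u = f' (syn_map F L u))
                 \<longrightarrow> (\<forall>C\<in>car (syn_mon F L). f' C = fL C))
          \<and> (\<forall>(M::('o,'m) dmon) e f.
               is_dmon ar Eqs M \<and> dmon_hom ar F M e \<and> e ` car F = car M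
               \<and> hom ar M Y f \<and> (\<forall>u\<in>car F. L u = f (e u)) \<longrightarrow>
               (\<exists>h. dmon_hom ar M (syn_mon F L) h \<and> h ` car M = car (syn_mon F L)
                  \<and> (\<forall>u\<in>car F. syn_map F L u = h (e u))
                  \<and> (\<forall>m\<in>car M. f m = fL (h m))
                  \<and> (\<forall>h'. dmon_hom ar M (syn_mon F L) h' \<and> (\<forall>u\<in>car F. syn_map F L u = h' (e u))
                         \<longrightarrow> (\<forall>m\<in>car M. h' m = h m))))"
  proof (intro exI[of _ "\<lambda>C. L (rep_cls C)"] conjI allI impI ballI)
    show "hom ar (syn_mon F L) Y (\<lambda>C. L (rep_cls C))" using hom_Q[OF F L L LR] .
    show "L u = L (rep_cls (syn_map F L u))" if "u \<in> car F" for u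
      unfolding syn_map_def using rep_resp[OF F L LR that] by simp
    show "f' C = L (rep_cls C)" if "hom ar (syn_mon F L) Y f' \<and> (\<forall>u\<in>car F. L u = f' (syn_map F L u))"
        "C \<in> car (syn_mon F L)" for f' C by (rule k_unique[OF F L]) (use that in simp_all)
    fix M :: "('o,'m) dmon" and e f
    assume a: "is_dmon ar Eqs M \<and> dmon_hom ar F M e \<and> e ` car F = car M
               \<and> hom ar M Y f \<and> (\<forall>u\<in>car F. L u = f (e u))"
    show "\<exists>h. dmon_hom ar M (syn_mon F L) h \<and> h ` car M = car (syn_mon F L)
                  \<and> (\<forall>u\<in>car F. syn_map F L u = h (e u))
                  \<and> (\<forall>m\<in>car M. f m = L (rep_cls (h m)))
                  \<and> (\<forall>h'. dmon_hom ar M (syn_mon F L) h' \<and> (\<forall>u\<in>car F. syn_map F L u = h' (e u))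
                         \<longrightarrow> (\<forall>m\<in>car M. h' m = h m))"
      by (rule h_part[OF F L]) (use a in simp_all)
  qed
  show ?thesis
    apply (intro conjI)
         apply (rule Q_dmon[OF F L var])
        apply (rule synmap_hom[OF F L])
       apply (rule synmap_surj[OF F L])
      apply (rule synmap_resp[OF F L])
     apply (rule univ)
    apply (rule fLp)
    done
qed

end
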